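(* Let $\mathbf X=\{X(\tilde r)\}_{\tilde r\in\mathbb N_0^d}$ be an $\mathbf F$-supermartingale, $\tilde s\in\mathbb N_0^d$, and $\tilde T\in\mathcal A(\tilde s)$. Then $\{X(\tilde T(t))\}_{t\in\mathbb N_0}$ is an $\mathbf F(\tilde T)$-supermartingale.
   Context: $(\Omega,\mathcal F,\mathbb P)$ complete; $\mathbf F=\{\mathcal F(\tilde s)\}_{\tilde s\in\mathbb N_0^d}$ satisfies (F1) monotonicity in the componentwise order, (F2) $\mathcal F(\tilde 0)$ contains all null sets, (F4) $\mathcal F(\tilde s),\mathcal F(\tilde r)$ conditionally independent given $\mathcal F(\tilde s\wedge\tilde r)$. $\mathbf X$ is an $\mathbf F$-supermartingale if each $X(\tilde s)$ is integrable, $\mathcal F(\tilde s)$-measurable, and $\mathbb E[X(\tilde r)\mid\mathcal F(\tilde s)]\le X(\tilde s)$ a.s. for $\tilde s\le\tilde r$. An allocation strategy for $\tilde s$ is an $\mathbb N_0^d$-valued $\{\tilde T(t)\}_{t\in\mathbb N_0}$ with $\tilde T(0)=\tilde s$, $\tilde T(t+1)=\tilde T(t)+\tilde e_j$ for some $j$ ($\tilde e_j$ unit vectors), and $\{\tilde T(t+1)=\tilde T(t)+\tilde e_j,\ \tilde T(t)=\tilde r\}\in\mathcal F(\tilde r)$; $\mathcal A(\tilde s)$ is their set. For a stopping point $\tilde\nu$ (i.e. $\{\tilde\nu=\tilde r\}\in\mathcal F(\tilde r)$ for all $\tilde r$), $\mathcal F(\tilde\nu):=\{A:A\cap\{\tilde\nu=\tilde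 r\}\in\mathcal F(\tilde r)\ \forall\tilde r\}$; $\mathbf F(\tilde T):=\{\mathcal F(\tilde T(t))\}_{t\in\mathbb N_0}$. *)

theory Defs
  imports "HOL-Probability.Probability"
begin

text \<open>Multiparameter index set: N_0^d is rendered as functions 'd \<Rightarrow> nat for a finite type 'd,
  ordered componentwise (the pointwise order on functions); componentwise minimum is inf.\<close>

definition unit_vec :: "'d \<Rightarrow> ('d \<Rightarrow> nat)" where
  "unit_vec j = (\<lambda>i. if i = j then 1 else 0)"

definition cond_indep :: "'a measure \<Rightarrow> 'a measure \<Rightarrow> 'a measure \<Rightarrow> 'a measure \<Rightarrow> bool" where
  "cond_indep M A B G \<longleftrightarrow>
     (\<forall>a\<in>sets A. \<forall>b\<in>sets B.
        AE \<omega> in M. real_cond_exp M G (indicator (a \<inter> b)) \<omega>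
                   = real_cond_exp M G (indicator a) \<omega> * real_cond_exp M G (indicator b) \<omega>)"

text \<open>The filtration conditions (F1), (F2), (F4), together with the standing requirement that
  every F(s) is a sub-sigma-algebra of the underlying probability space.\<close>
definition multi_filtration :: "'a measure \<Rightarrow> (('d::finite \<Rightarrow> nat) \<Rightarrow> 'a measure) \<Rightarrow> bool" where
  "multi_filtration M F \<longleftrightarrow>
     (\<forall>s. subalgebra M (F s)) \<and>
     (\<forall>s r. s \<le> r \<longrightarrow> sets (F s) \<subseteq> sets (F r)) \<and>
     null_sets M \<subseteq> sets (F (\<lambda>_. 0)) \<and>
     (\<forall>s r. cond_indep M (F s) (F r) (F (inf s r)))"

definition supermartingale :: "'a measure \<Rightarrow> ('i::order \<Rightarrow> 'a measure) \<Rightarrow> ('i \<Rightarrow> 'a \<Rightarrow> real) \<Rightarrow> bool" where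
  "supermartingale M F X \<longleftrightarrow>
     (\<forall>s. integrable M (X s) \<and> X s \<in> borel_measurable (F s)) \<and>
     (\<forall>s r. s \<le> r \<longrightarrow> (AE \<omega> in M. real_cond_exp M (F s) (X r) \<omega> \<le> X s \<omega>))"

definition allocation_strategy ::
  "'a measure \<Rightarrow> (('d::finite \<Rightarrow> nat) \<Rightarrow> 'a measure) \<Rightarrow> ('d \<Rightarrow> nat) \<Rightarrow> (nat \<Rightarrow> 'a \<Rightarrow> ('d \<Rightarrow> nat)) \<Rightarrow> bool" where
  "allocation_strategy M F s T \<longleftrightarrow>
     (\<forall>\<omega>\<in>space M. T 0 \<omega> = s) \<and>
     (\<forall>t. \<forall>\<omega>\<in>space M. \<exists>j. T (Suc t) \<omega> = (\<lambda>i. T t \<omega> i + unit_vec j i)) \<and>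
     (\<forall>t j r. {\<omega>\<in>space M. T (Suc t) \<omega> = (\<lambda>i. T t \<omega> i + unit_vec j i) \<and> T t \<omega> = r} \<in> sets (F r))"

definition stopping_point :: "'a measure \<Rightarrow> (('d::finite \<Rightarrow> nat) \<Rightarrow> 'a measure) \<Rightarrow> ('a \<Rightarrow> ('d \<Rightarrow> nat)) \<Rightarrow> bool" where
  "stopping_point M F \<nu> \<longleftrightarrow> (\<forall>r. {\<omega>\<in>space M. \<nu> \<omega> = r} \<in> sets (F r))"

definition stopped_sigma :: "'a measure \<Rightarrow> (('d::finite \<Rightarrow> nat) \<Rightarrow> 'a measure) \<Rightarrow> ('a \<Rightarrow> ('d \<Rightarrow> nat)) \<Rightarrow> 'a measure" where
  "stopped_sigma M F \<nu> = sigma (space M) {A. A \<subseteq> space M \<and> (\<forall>r. A \<inter> {\<omega>\<in>space M. \<nu> \<omega> = r} \<in> sets (F r))}"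

end

theory Submission
  imports Defs "HOL-Library.Countable"
begin

lemma cond_exp_le_from_integrals:
  fixes f g :: "'a \<Rightarrow> real"
  assumes P: "prob_space M" and sub: "subalgebra M G"
    and fi: "integrable M f" and gi: "integrable M g" and gm: "g \<in> borel_measurable G"
    and le: "\<And>A. A \<in> sets G \<Longrightarrow> (\<integral>x. indicator A x * f x \<partial>M) \<le> (\<integral>x. indicator A x * g x \<partial>M)"
  shows "AE x in M. real_cond_exp M G f x \<le> g x"
proof -
  interpret prob_space M by (rule P)
  interpret finite_measure_subalgebra M G by unfold_locales (rule sub)
  define h where "h = real_cond_exp M G f"
  have hm: "h \<in> borel_measurable G" unfolding h_def by (rule borel_measurable_cond_exp)
  have hi: "integrable M h" unfolding h_def by (rule real_cond_exp_int(1)[OF fi])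
  have spG: "space G = space M" using sub by (simp add: subalgebra_def)
  define A where "A = {x\<in>space G. g x < h x}"
  have AG: "A \<in> sets G" unfolding A_def using hm gm by measurable
  have AM: "A \<in> sets M" using AG sub by (auto simp: subalgebra_def)
  have gmM: "g \<in> borel_measurable M" using gi by auto
  have "(\<integral>x. indicator A x * h x \<partial>M) = (\<integral>x. indicator A x * f x \<partial>M)"
    unfolding h_def
    by (rule real_cond_exp_intg(2)) (auto intro: integrable_mult_indicator[OF AM fi, simplified] borel_measurable_indicator[OF AG] fi borel_measurable_integrable)
  also have "\<dots> \<le> (\<integral>x. indicator A x * g x \<partial>M)" by (rule le[OF AG])
  finally have I: "(\<integral>x. indicator A x * h x \<partial>M) \<le> (\<integral>x. indicator A x * g x \<partial>M)" .
  have ih: "integrable M (\<lambda>x. indicator A x * h x)" using integrable_mult_indicator[OF AM hi] by simp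
  have ig: "integrable M (\<lambda>x. indicator A x * g x)" using integrable_mult_indicator[OF AM gi] by simp
  have D: "integrable M (\<lambda>x. indicator A x * h x - indicator A x * g x)" using ih ig by simp
  have nn: "AE x in M. 0 \<le> indicator A x * h x - indicator A x * g x"
    by (auto simp: A_def indicator_def)
  have "(\<integral>x. indicator A x * h x - indicator A x * g x \<partial>M) = 0"
  proof -
    have "(\<integral>x. indicator A x * h x - indicator A x * g x \<partial>M) \<le> 0"
      using I ih ig by simp
    moreover have "0 \<le> (\<integral>x. indicator A x * h x - indicator A x * g x \<partial>M)"
      using nn by (rule integral_nonneg_AE)
    ultimately show ?thesis by linarith
  qed
  then have "AE x in M. indicator A x * h x - indicator A x * g x = 0"
    using integral_nonneg_eq_0_iff_AE[OF D nn] by simp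
  then show ?thesis using AE_space
    by eventually_elim (auto simp: A_def h_def spG indicator_def split: if_splits)
qed

lemma int_le_from_cond_exp:
  fixes Y Z :: "'a \<Rightarrow> real"
  assumes P: "prob_space M" and sub: "subalgebra M H" and CH: "C \<in> sets H"
    and Yi: "integrable M Y" and Zi: "integrable M Z"
    and ae: "AE x in M. real_cond_exp M H Y x \<le> Z x"
  shows "(\<integral>x. Y x * indicator C x \<partial>M) \<le> (\<integral>x. Z x * indicator C x \<partial>M)"
proof -
  interpret prob_space M by (rule P)
  interpret finite_measure_subalgebra M H by unfold_locales (rule sub)
  have CM: "C \<in> sets M" using CH sub by (auto simp: subalgebra_def)
  have "(\<integral>x. Y x * indicator C x \<partial>M) = (\<integral>x. indicator C x * Y x \<partial>M)" by (simp add: mult.commute)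
  also have "\<dots> = (\<integral>x. indicator C x * real_cond_exp M H Y x \<partial>M)"
    by (rule real_cond_exp_intg(2)[symmetric]) (auto intro: integrable_mult_indicator[OF CM Yi, simplified] borel_measurable_indicator[OF CH] Yi borel_measurable_integrable)
  also have "\<dots> \<le> (\<integral>x. indicator C x * Z x \<partial>M)"
  proof (rule integral_mono_AE)
    show "integrable M (\<lambda>x. indicator C x * real_cond_exp M H Y x)"
      using integrable_mult_indicator[OF CM real_cond_exp_int(1)[OF Yi]] by simp
    show "integrable M (\<lambda>x. indicator C x * Z x)"
      using integrable_mult_indicator[OF CM Zi] by simp
    show "AE x in M. indicator C x * real_cond_exp M H Y x \<le> indicator C x * Z x"
      using ae by eventually_elim (auto simp: indicator_def)
  qed
  also have "\<dots> = (\<integral>x. Z x * indicator C x \<partial>M)" by (simp add: mult.commute)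
  finally show ?thesis .
qed

locale alloc =
  fixes M :: "'a measure"
    and F :: "('d::finite \<Rightarrow> nat) \<Rightarrow> 'a measure"
    and X :: "('d \<Rightarrow> nat) \<Rightarrow> 'a \<Rightarrow> real"
    and s :: "'d \<Rightarrow> nat"
    and T :: "nat \<Rightarrow> 'a \<Rightarrow> ('d \<Rightarrow> nat)"
  assumes P: "prob_space M"
    and MF: "multi_filtration M F"
    and SM: "supermartingale M F X"
    and AS: "allocation_strategy M F s T"
begin

definition "E t r = {\<omega>\<in>space M. T t \<omega> = r}"
definition "B t j r = {\<omega>\<in>space M. T (Suc t) \<omega> = (\<lambda>i. T t \<omega> i + unit_vec j i) \<and> T t \<omega> = r}"
definition "R t = {r. \<forall>i. r i \<le> s i + t}"
definition "Gs t = {A. A \<subseteq> space M \<and> (\<forall>r. A \<inter> E t r \<in> sets (F r))}"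

lemma subF: "subalgebra M (F r)" using MF by (simp add: multi_filtration_def)
lemma spF: "space (F r) = space M" using subF by (simp add: subalgebra_def)
lemma setsF: "sets (F r) \<subseteq> sets M" using subF by (simp add: subalgebra_def)
lemma monoF: "r \<le> r' \<Longrightarrow> sets (F r) \<subseteq> sets (F r')" using MF by (simp add: multi_filtration_def)
lemma Xint: "integrable M (X r)" using SM by (simp add: supermartingale_def)
lemma Xmeas: "X r \<in> borel_measurable (F r)" using SM by (simp add: supermartingale_def)
lemma Xsup: "r \<le> r' \<Longrightarrow> AE \<omega> in M. real_cond_exp M (F r) (X r') \<omega> \<le> X r \<omega>"
  using SM by (simp add: supermartingale_def)
lemma T0: "\<omega> \<in> space M \<Longrightarrow> T 0 \<omega> = s" using AS by (simp add: allocation_strategy_def)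
lemma Tstep: "\<omega> \<in> space M \<Longrightarrow> \<exists>j. T (Suc t) \<omega> = (\<lambda>i. T t \<omega> i + unit_vec j i)"
  using AS by (simp add: allocation_strategy_def)
lemma BF: "B t j r \<in> sets (F r)" using AS unfolding allocation_strategy_def B_def by blast

lemma B_sub: "B t j r \<subseteq> E t r" by (auto simp: B_def E_def)

lemma EF: "E t r \<in> sets (F r)"
proof -
  have "E t r = (\<Union>j\<in>UNIV. B t j r)"
    using Tstep by (auto simp: E_def B_def)
  also have "\<dots> \<in> sets (F r)"
    by (rule sets.countable_UN'') (auto intro: countable_finite BF)
  finally show ?thesis .
qed

lemma finR: "finite (R t)"
proof -
  have "R t = PiE UNIV (\<lambda>i. {..s i + t})" by (auto simp: R_def PiE_UNIV_domain Pi_def)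
  then show ?thesis by (simp add: finite_PiE)
qed

lemma unit_vec_le: "unit_vec j i \<le> 1" by (simp add: unit_vec_def)

lemma TR: "\<omega> \<in> space M \<Longrightarrow> T t \<omega> \<in> R t"
proof (induction t)
  case 0 then show ?case by (simp add: T0 R_def)
next
  case (Suc t)
  obtain j where j: "T (Suc t) \<omega> = (\<lambda>i. T t \<omega> i + unit_vec j i)" using Tstep[OF Suc.prems] by blast
  show ?case using Suc unit_vec_le[of j] unfolding j R_def
    by (auto intro: add_mono[of _ _ "unit_vec j _" 1, simplified] simp: add_mono)
qed

lemma T_mono: "\<omega> \<in> space M \<Longrightarrow> T t \<omega> \<le> T (Suc t) \<omega>"
  using Tstep[of \<omega> t] by (auto simp: le_fun_def)

lemma Gs_sigma: "sigma_algebra (space M) (Gs t)"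
  unfolding sigma_algebra_iff2
proof (intro conjI allI impI ballI)
  show "Gs t \<subseteq> Pow (space M)" by (auto simp: Gs_def)
  show "{} \<in> Gs t" by (auto simp: Gs_def)
next
  fix A assume A: "A \<in> Gs t"
  show "space M - A \<in> Gs t" unfolding Gs_def
  proof (intro CollectI conjI allI)
    fix r
    have "(space M - A) \<inter> E t r = E t r - (A \<inter> E t r)" by (auto simp: E_def)
    also have "\<dots> \<in> sets (F r)" using A EF by (auto simp: Gs_def)
    finally show "(space M - A) \<inter> E t r \<in> sets (F r)" .
  qed auto
next
  fix A :: "nat \<Rightarrow> 'a set" assume A: "range A \<subseteq> Gs t"
  show "(\<Union>i. A i) \<in> Gs t" unfolding Gs_def
  proof (intro CollectI conjI allI)
    show "(\<Union>i. A i) \<subseteq> space M" using A by (auto simp: Gs_def)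
    fix r
    have "(\<Union>i. A i) \<inter> E t r = (\<Union>i. A i \<inter> E t r)" by auto
    also have "\<dots> \<in> sets (F r)" using A by (intro sets.countable_UN'') (auto simp: Gs_def)
    finally show "(\<Union>i. A i) \<inter> E t r \<in> sets (F r)" .
  qed
qed

lemma sets_G: "sets (stopped_sigma M F (T t)) = Gs t"
proof -
  have "sets (stopped_sigma M F (T t)) = sigma_sets (space M) (Gs t)"
    unfolding stopped_sigma_def Gs_def E_def by (subst sets_measure_of) auto
  also have "\<dots> = Gs t" by (rule sigma_algebra.sigma_sets_eq[OF Gs_sigma])
  finally show ?thesis .
qed

lemma space_G: "space (stopped_sigma M F (T t)) = space M"
  unfolding stopped_sigma_def by (subst space_measure_of) auto

lemma Gs_sets: "Gs t \<subseteq> sets M"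
proof
  fix A assume A: "A \<in> Gs t"
  have "A = (\<Union>r\<in>R t. A \<inter> E t r)" using A TR by (auto simp: Gs_def E_def)
  also have "\<dots> \<in> sets M"
  proof (intro sets.finite_UN finR)
    fix r have "A \<inter> E t r \<in> sets (F r)" using A by (auto simp: Gs_def)
    then show "A \<inter> E t r \<in> sets M" using setsF by blast
  qed
  finally show "A \<in> sets M" .
qed

lemma sub_G: "subalgebra M (stopped_sigma M F (T t))"
  using Gs_sets by (simp add: subalgebra_def sets_G space_G)

lemma XT_meas: "(\<lambda>\<omega>. X (T t \<omega>) \<omega>) \<in> borel_measurable (stopped_sigma M F (T t))"
proof (rule measurableI)
  fix S :: "real set" assume S: "S \<in> sets borel"
  show "(\<lambda>\<omega>. X (T t \<omega>) \<omega>) -` S \<inter> space (stopped_sigma M F (T t)) \<in> sets (stopped_sigma M F (T t))"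
    unfolding sets_G space_G Gs_def
  proof (intro CollectI conjI allI)
    fix r
    have "(\<lambda>\<omega>. X (T t \<omega>) \<omega>) -` S \<inter> space M \<inter> E t r = (X r -` S \<inter> space (F r)) \<inter> E t r"
      by (auto simp: E_def spF)
    also have "\<dots> \<in> sets (F r)" using measurable_sets[OF Xmeas S] EF by auto
    finally show "(\<lambda>\<omega>. X (T t \<omega>) \<omega>) -` S \<inter> space M \<inter> E t r \<in> sets (F r)" .
  qed auto
qed auto

lemma XT_int: "integrable M (\<lambda>\<omega>. X (T t \<omega>) \<omega>)"
proof -
  have "integrable M (\<lambda>\<omega>. \<Sum>r\<in>R t. X r \<omega> * indicator (E t r) \<omega>)"
  proof (rule Bochner_Integration.integrable_sum[where I="R t" and f="\<lambda>r \<omega>. X r \<omega> * indicator (E t r) \<omega>"])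
    fix r
    have "E t r \<in> sets M" using EF setsF by blast
    then show "integrable M (\<lambda>\<omega>. X r \<omega> * indicator (E t r) \<omega>)"
      using Xint by (rule integrable_real_mult_indicator)
  qed
  moreover have "(\<Sum>r\<in>R t. X r \<omega> * indicator (E t r) \<omega>) = X (T t \<omega>) \<omega>" if "\<omega> \<in> space M" for \<omega>
  proof -
    have "(\<Sum>r\<in>R t. X r \<omega> * indicator (E t r) \<omega>) = (\<Sum>r\<in>R t. if r = T t \<omega> then X (T t \<omega>) \<omega> else 0)"
      using that by (intro sum.cong) (auto simp: E_def indicator_def)
    also have "\<dots> = X (T t \<omega>) \<omega>" using finR TR[OF that] by (simp add: sum.delta')
    finally show ?thesis .
  qed
  ultimately show ?thesis
    by (subst Bochner_Integration.integrable_cong[OF refl, where g="\<lambda>\<omega>. \<Sum>r\<in>R t. X r \<omega> * indicator (E t r) \<omega>"]) auto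
qed

lemma Gs_mono: "Gs t \<subseteq> Gs (Suc t)"
proof
  fix A assume A: "A \<in> Gs t"
  show "A \<in> Gs (Suc t)" unfolding Gs_def
  proof (intro CollectI conjI allI)
    show "A \<subseteq> space M" using A by (auto simp: Gs_def)
    fix r'
    have "A \<inter> E (Suc t) r' = (\<Union>r\<in>{r\<in>R t. r \<le> r'}. (A \<inter> E t r) \<inter> E (Suc t) r')"
      using A TR T_mono by (auto simp: Gs_def E_def)
    also have "\<dots> \<in> sets (F r')"
    proof (intro sets.finite_UN)
      show "finite {r\<in>R t. r \<le> r'}" using finR by simp
      fix r assume r: "r \<in> {r\<in>R t. r \<le> r'}"
      have "A \<inter> E t r \<in> sets (F r)" using A by (auto simp: Gs_def)
      then have "A \<inter> E t r \<in> sets (F r')" using monoF r by blast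
      then show "A \<inter> E t r \<inter> E (Suc t) r' \<in> sets (F r')" using EF by blast
    qed
    finally show "A \<inter> E (Suc t) r' \<in> sets (F r')" .
  qed
qed

lemma step:
  assumes A: "A \<in> Gs t"
  shows "(\<integral>\<omega>. indicator A \<omega> * X (T (Suc t) \<omega>) \<omega> \<partial>M) \<le> (\<integral>\<omega>. indicator A \<omega> * X (T t \<omega>) \<omega> \<partial>M)"
proof -
  define ev :: "'d \<Rightarrow> ('d \<Rightarrow> nat) \<Rightarrow> ('d \<Rightarrow> nat)" where "ev j r = (\<lambda>i. r i + unit_vec j i)" for j r
  define C where "C r j = A \<inter> B t j r" for r j
  have CF: "C r j \<in> sets (F r)" for r j
  proof -
    have "C r j = (A \<inter> E t r) \<inter> B t j r" using B_sub by (auto simp: C_def)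
    moreover have "A \<inter> E t r \<in> sets (F r)" using A by (auto simp: Gs_def)
    ultimately show ?thesis using BF by simp
  qed
  have CM: "C r j \<in> sets M" for r j using CF setsF by blast
  have uv: "j = k" if "ev j r = ev k r" for j k r
  proof -
    have "r j + unit_vec j j = r j + unit_vec k j" using fun_cong[OF that, of j] by (simp add: ev_def)
    then show ?thesis by (auto simp: unit_vec_def split: if_splits)
  qed
  have evle: "r \<le> ev j r" for j r by (simp add: ev_def le_fun_def)
  have pt: "indicator A \<omega> * X (T (Suc t) \<omega>) \<omega> = (\<Sum>r\<in>R t. \<Sum>j\<in>UNIV. X (ev j r) \<omega> * indicator (C r j) \<omega>)
     \<and> indicator A \<omega> * X (T t \<omega>) \<omega> = (\<Sum>r\<in>R t. \<Sum>j\<in>UNIV. X r \<omega> * indicator (C r j) \<omega>)"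
    if w: "\<omega> \<in> space M" for \<omega>
  proof -
    obtain j0 where j0: "T (Suc t) \<omega> = ev j0 (T t \<omega>)" using Tstep[OF w] by (auto simp: ev_def)
    have ind: "indicator (C r j) \<omega> = (if r = T t \<omega> then (if j = j0 then indicator A \<omega> else 0) else (0::real))" for r j
      using w uv[of j "T t \<omega>" j0] by (auto simp: C_def B_def indicator_def j0 ev_def[symmetric])
    have s1: "(\<Sum>r\<in>R t. \<Sum>j\<in>UNIV. X (ev j r) \<omega> * indicator (C r j) \<omega>) = indicator A \<omega> * X (T (Suc t) \<omega>) \<omega>"
    proof -
      have inner: "(\<Sum>j\<in>UNIV. X (ev j r0) \<omega> * (if j = j0 then a else 0)) = a * X (ev j0 r0) \<omega>" for a r0
      proof -
        have "(\<Sum>j\<in>UNIV. X (ev j r0) \<omega> * (if j = j0 then a else 0)) = (\<Sum>j\<in>UNIV. if j = j0 then a * X (ev j r0) \<omega> else 0)"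
          by (intro sum.cong) auto
        then show ?thesis by simp
      qed
      have "(\<Sum>r\<in>R t. \<Sum>j\<in>UNIV. X (ev j r) \<omega> * indicator (C r j) \<omega>)
          = (\<Sum>r\<in>R t. if r = T t \<omega> then (\<Sum>j\<in>UNIV. if j = j0 then indicator A \<omega> * X (T (Suc t) \<omega>) \<omega> else 0) else 0)"
        unfolding ind j0 by (intro sum.cong refl) (auto simp: inner)
      also have "\<dots> = indicator A \<omega> * X (T (Suc t) \<omega>) \<omega>"
        using finR TR[OF w] by (simp add: sum.delta')
      finally show ?thesis .
    qed
    have s2: "(\<Sum>r\<in>R t. \<Sum>j\<in>UNIV. X r \<omega> * indicator (C r j) \<omega>) = indicator A \<omega> * X (T t \<omega>) \<omega>"
    proof -
      have inner: "(\<Sum>j\<in>UNIV. X r0 \<omega> * (if j = j0 then a else 0)) = a * X r0 \<omega>" for a r0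
      proof -
        have "(\<Sum>j\<in>UNIV. X r0 \<omega> * (if j = j0 then a else 0)) = (\<Sum>j\<in>UNIV. if j = j0 then a * X r0 \<omega> else 0)"
          by (intro sum.cong) auto
        then show ?thesis by simp
      qed
      have "(\<Sum>r\<in>R t. \<Sum>j\<in>UNIV. X r \<omega> * indicator (C r j) \<omega>)
          = (\<Sum>r\<in>R t. if r = T t \<omega> then indicator A \<omega> * X (T t \<omega>) \<omega> else 0)"
        unfolding ind by (intro sum.cong refl) (auto simp: inner)
      also have "\<dots> = indicator A \<omega> * X (T t \<omega>) \<omega>"
        using finR TR[OF w] by (simp add: sum.delta')
      finally show ?thesis .
    qed
    show ?thesis using s1 s2 by simp
  qed
  have i1: "integrable M (\<lambda>\<omega>. X (ev j r) \<omega> * indicator (C r j) \<omega>)" for r j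
    using CM Xint by (rule integrable_real_mult_indicator)
  have i2: "integrable M (\<lambda>\<omega>. X r \<omega> * indicator (C r j) \<omega>)" for r j
    using CM Xint by (rule integrable_real_mult_indicator)
  have "(\<integral>\<omega>. indicator A \<omega> * X (T (Suc t) \<omega>) \<omega> \<partial>M)
      = (\<integral>\<omega>. (\<Sum>r\<in>R t. \<Sum>j\<in>UNIV. X (ev j r) \<omega> * indicator (C r j) \<omega>) \<partial>M)"
    using pt by (intro Bochner_Integration.integral_cong) auto
  also have "\<dots> = (\<Sum>r\<in>R t. \<Sum>j\<in>UNIV. (\<integral>\<omega>. X (ev j r) \<omega> * indicator (C r j) \<omega> \<partial>M))"
  proof -
    have "(\<integral>\<omega>. (\<Sum>r\<in>R t. \<Sum>j\<in>UNIV. X (ev j r) \<omega> * indicator (C r j) \<omega>) \<partial>M)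
        = (\<Sum>r\<in>R t. (\<integral>\<omega>. (\<Sum>j\<in>UNIV. X (ev j r) \<omega> * indicator (C r j) \<omega>) \<partial>M))"
      by (rule Bochner_Integration.integral_sum) (intro Bochner_Integration.integrable_sum i1)
    also have "\<dots> = (\<Sum>r\<in>R t. \<Sum>j\<in>UNIV. (\<integral>\<omega>. X (ev j r) \<omega> * indicator (C r j) \<omega> \<partial>M))"
      by (intro sum.cong refl Bochner_Integration.integral_sum i1)
    finally show ?thesis .
  qed
  also have "\<dots> \<le> (\<Sum>r\<in>R t. \<Sum>j\<in>UNIV. (\<integral>\<omega>. X r \<omega> * indicator (C r j) \<omega> \<partial>M))"
    by (intro sum_mono int_le_from_cond_exp[OF P subF CF Xint Xint Xsup[OF evle]])
  also have "\<dots> = (\<integral>\<omega>. (\<Sum>r\<in>R t. \<Sum>j\<in>UNIV. X r \<omega> * indicator (C r j) \<omega>) \<partial>M)"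
  proof -
    have "(\<integral>\<omega>. (\<Sum>r\<in>R t. \<Sum>j\<in>UNIV. X r \<omega> * indicator (C r j) \<omega>) \<partial>M)
        = (\<Sum>r\<in>R t. (\<integral>\<omega>. (\<Sum>j\<in>UNIV. X r \<omega> * indicator (C r j) \<omega>) \<partial>M))"
      by (rule Bochner_Integration.integral_sum) (intro Bochner_Integration.integrable_sum i2)
    also have "\<dots> = (\<Sum>r\<in>R t. \<Sum>j\<in>UNIV. (\<integral>\<omega>. X r \<omega> * indicator (C r j) \<omega> \<partial>M))"
      by (intro sum.cong refl Bochner_Integration.integral_sum i2)
    finally show ?thesis by simp
  qed
  also have "\<dots> = (\<integral>\<omega>. indicator A \<omega> * X (T t \<omega>) \<omega> \<partial>M)"
    using pt by (intro Bochner_Integration.integral_cong) auto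
  finally show ?thesis .
qed

lemma chain:
  assumes A: "A \<in> Gs t" and tu: "t \<le> u"
  shows "A \<in> Gs u \<and> (\<integral>\<omega>. indicator A \<omega> * X (T u \<omega>) \<omega> \<partial>M) \<le> (\<integral>\<omega>. indicator A \<omega> * X (T t \<omega>) \<omega> \<partial>M)"
  using tu
proof (induction u rule: dec_induct)
  case base then show ?case using A by simp
next
  case (step u)
  then have Au: "A \<in> Gs u" by simp
  have "A \<in> Gs (Suc u)" using Au Gs_mono by blast
  moreover have "(\<integral>\<omega>. indicator A \<omega> * X (T (Suc u) \<omega>) \<omega> \<partial>M) \<le> (\<integral>\<omega>. indicator A \<omega> * X (T u \<omega>) \<omega> \<partial>M)"
    by (rule alloc.step[OF alloc_axioms Au])
  ultimately show ?case using step.IH by linarith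
qed

end

theorem proposition6p11:
  fixes M :: "'a measure"
    and F :: "('d::finite \<Rightarrow> nat) \<Rightarrow> 'a measure"
    and X :: "('d \<Rightarrow> nat) \<Rightarrow> 'a \<Rightarrow> real"
    and s :: "'d \<Rightarrow> nat"
    and T :: "nat \<Rightarrow> 'a \<Rightarrow> ('d \<Rightarrow> nat)"
  assumes "prob_space M"
    and "complete_measure M"
    and "multi_filtration M F"
    and "supermartingale M F X"
    and "allocation_strategy M F s T"
  shows "supermartingale M (\<lambda>t. stopped_sigma M F (T t)) (\<lambda>t \<omega>. X (T t \<omega>) \<omega>)"
proof -
  interpret alloc M F X s T using assms by (simp add: alloc_def)
  show ?thesis unfolding supermartingale_def
  proof (intro conjI allI impI)
    fix t show "integrable M (\<lambda>\<omega>. X (T t \<omega>) \<omega>)" by (rule XT_int)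
    show "(\<lambda>\<omega>. X (T t \<omega>) \<omega>) \<in> borel_measurable (stopped_sigma M F (T t))" by (rule XT_meas)
  next
    fix t u :: nat assume tu: "t \<le> u"
    show "AE \<omega> in M. real_cond_exp M (stopped_sigma M F (T t)) (\<lambda>\<omega>. X (T u \<omega>) \<omega>) \<omega> \<le> X (T t \<omega>) \<omega>"
    proof (rule cond_exp_le_from_integrals[OF P sub_G XT_int XT_int XT_meas])
      fix A assume "A \<in> sets (stopped_sigma M F (T t))"
      then have "A \<in> Gs t" by (simp add: sets_G)
      then show "(\<integral>\<omega>. indicator A \<omega> * X (T u \<omega>) \<omega> \<partial>M) \<le> (\<integral>\<omega>. indicator A \<omega> * X (T t \<omega>) \<omega> \<partial>M)"
        using chain tu by blast
    qed
  qed
qed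

end
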